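(* Let $V$ be a real vector space of dimension $n+2$ with a nondegenerate symmetric bilinear form $g_{AB}$ (used to raise and lower indices), let $\phi$ be the linear map on the space of algebraic curvature tensors on $V$ sending $R_{ABCD}$ to its trace-free part $\mathring R_{ABCD}$, and let $I^A\in V$ satisfy $\iota:=I_AI^A\neq0$. Let $I^\perp$ be the space of algebraic curvature tensors with $I^AR_{ABCD}=0$. Then $\ker(\phi)\cap I^\perp$ is spanned by $\big(g\wedge(g-\tfrac2\iota I^2)\big)_{ABCD}$, where $(I^2)_{AB}=I_AI_B$.
   Context: An algebraic curvature tensor on $V$ is $R_{ABCD}$ with $R_{ABCD}=-R_{BACD}=-R_{ABDC}$ and $R_{[ABC]D}=0$. For symmetric $Q_{AB},P_{AB}$: $(Q\wedge P)_{ABCD}=Q_{AC}P_{BD}-Q_{BC}P_{AD}+Q_{BD}P_{AC}-Q_{AD}P_{BC}$. The trace-free part of $R_{ABCD}$ is $\mathring R_{ABCD}=R_{ABCD}-(g\wedge P)_{ABCD}$ where $P_{AC}=\frac1n(R_{ABC}{}^B-\mathsf Jg_{AC})$ and $\mathsf J=P_A{}^A=\frac1{2(n+1)}R_{AB}{}^{AB}$. *)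

theory Defs
  imports "HOL-Analysis.Analysis"
begin

text \<open>Tensors on V = R^'i are represented by their components w.r.t. the standard
basis indexed by the finite type 'i (dim V = CARD('i) = n + 2).  A 4-tensor with all
indices down is a function 'i => 'i => 'i => 'i => real.\<close>

type_synonym 'i tensor4 = "'i \<Rightarrow> 'i \<Rightarrow> 'i \<Rightarrow> 'i \<Rightarrow> real"
type_synonym 'i tensor2 = "'i \<Rightarrow> 'i \<Rightarrow> real"

definition alg_curv :: "'i::finite tensor4 \<Rightarrow> bool" where
  "alg_curv R \<longleftrightarrow>
     (\<forall>A B C D. R A B C D = - R B A C D) \<and>
     (\<forall>A B C D. R A B C D = - R A B D C) \<and>
     (\<forall>A B C D. R A B C D + R B C A D + R C A B D = 0)"

definition wedge :: "'i tensor2 \<Rightarrow> 'i tensor2 \<Rightarrow> 'i tensor4" where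
  "wedge Q P = (\<lambda>A B C D. Q A C * P B D - Q B C * P A D + Q B D * P A C - Q A D * P B C)"

definition dimn :: "'i::finite itself \<Rightarrow> nat" where
  "dimn _ = CARD('i) - 2"

definition ginv :: "real^'i^'i \<Rightarrow> 'i::finite tensor2" where
  "ginv g = (\<lambda>A B. matrix_inv g $ A $ B)"

definition ric :: "real^'i^'i \<Rightarrow> 'i::finite tensor4 \<Rightarrow> 'i tensor2" where
  "ric g R = (\<lambda>A C. \<Sum>B\<in>UNIV. \<Sum>D\<in>UNIV. R A B C D * ginv g D B)"

definition Jsc :: "real^'i^'i \<Rightarrow> 'i::finite tensor4 \<Rightarrow> real" where
  "Jsc g R = (1 / (2 * (real (dimn TYPE('i)) + 1))) *
     (\<Sum>A\<in>UNIV. \<Sum>B\<in>UNIV. \<Sum>C\<in>UNIV. \<Sum>D\<in>UNIV. R A B C D * ginv g C A * ginv g D B)"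

definition Psch :: "real^'i^'i \<Rightarrow> 'i::finite tensor4 \<Rightarrow> 'i tensor2" where
  "Psch g R = (\<lambda>A C. (1 / real (dimn TYPE('i))) * (ric g R A C - Jsc g R * g $ A $ C))"

definition trace_free :: "real^'i^'i \<Rightarrow> 'i::finite tensor4 \<Rightarrow> 'i tensor4" where
  "trace_free g R = (\<lambda>A B C D. R A B C D - wedge (\<lambda>X Y. g $ X $ Y) (Psch g R) A B C D)"

definition lower :: "real^'i^'i \<Rightarrow> real^'i \<Rightarrow> 'i::finite \<Rightarrow> real" where
  "lower g I = (\<lambda>A. \<Sum>B\<in>UNIV. g $ A $ B * I $ B)"

end

theory Submission
  imports Defs
begin

lemma delta_d1[simp]: "(\<Sum>j\<in>(UNIV::'i::finite set). f j * (if j = c then 1 else (0::real))) = f c"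
  by (subst sum.cong[OF refl, of _ _ "\<lambda>j. if c = j then f j else 0"]) auto
lemma delta_d2[simp]: "(\<Sum>j\<in>(UNIV::'i::finite set). f j * (if c = j then 1 else (0::real))) = f c"
  by (subst sum.cong[OF refl, of _ _ "\<lambda>j. if c = j then f j else 0"]) auto
lemma delta_d3[simp]: "(\<Sum>j\<in>(UNIV::'i::finite set). (if j = c then 1 else (0::real)) * f j) = f c"
  by (subst sum.cong[OF refl, of _ _ "\<lambda>j. if c = j then f j else 0"]) auto
lemma delta_d4[simp]: "(\<Sum>j\<in>(UNIV::'i::finite set). (if c = j then 1 else (0::real)) * f j) = f c"
  by (subst sum.cong[OF refl, of _ _ "\<lambda>j. if c = j then f j else 0"]) auto

locale met = fixes G H :: "'i::finite \<Rightarrow> 'i \<Rightarrow> real"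
  assumes GS: "G a b = G b a" and HS: "H a b = H b a"
    and GH: "(\<Sum>b\<in>UNIV. G a b * H b c) = (if a = c then 1 else 0)"
begin

lemma HG: "(\<Sum>b\<in>UNIV. H a b * G b c) = (if a = c then 1 else 0)"
proof -
  have "(\<Sum>b\<in>UNIV. H a b * G b c) = (\<Sum>b\<in>UNIV. G c b * H b a)"
    by (rule sum.cong) (auto simp: GS[of c] HS[of a] mult.commute)
  then show ?thesis by (simp add: GH eq_commute)
qed

lemma trHG: "(\<Sum>b\<in>UNIV. \<Sum>c\<in>UNIV. H b c * G c b) = real CARD('i)"
  by (simp add: HG)

lemma wedge_ric:
  "(\<Sum>b\<in>UNIV. \<Sum>d\<in>UNIV. wedge G Q a b c d * H d b)
   = (real CARD('i) - 2) * Q a c + (\<Sum>b\<in>UNIV. \<Sum>d\<in>UNIV. Q b d * H d b) * G a c"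
proof -
  have e: "wedge G Q a b c d * H d b = G a c * (Q b d * H d b) - Q a d * (H d b * G b c)
     + Q a c * (H d b * G b d) - Q b c * (G a d * H d b)" for b d
    by (simp add: wedge_def algebra_simps)
  have s1: "(\<Sum>b\<in>UNIV. \<Sum>d\<in>UNIV. Q a d * (H d b * G b c)) = Q a c"
    by (subst sum.swap) (simp add: sum_distrib_left[symmetric] HG)
  have s2: "(\<Sum>b\<in>UNIV. \<Sum>d\<in>UNIV. Q b c * (G a d * H d b)) = Q a c"
    by (simp add: sum_distrib_left[symmetric] GH)
  have s3: "(\<Sum>b\<in>UNIV. \<Sum>d\<in>UNIV. Q a c * (H d b * G b d)) = Q a c * real CARD('i)"
    by (subst sum.swap) (simp add: sum_distrib_left[symmetric] HG)
  have "(\<Sum>b\<in>UNIV. \<Sum>d\<in>UNIV. wedge G Q a b c d * H d b)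
     = G a c * (\<Sum>b\<in>UNIV. \<Sum>d\<in>UNIV. Q b d * H d b) - (\<Sum>b\<in>UNIV. \<Sum>d\<in>UNIV. Q a d * (H d b * G b c))
       + (\<Sum>b\<in>UNIV. \<Sum>d\<in>UNIV. Q a c * (H d b * G b d)) - (\<Sum>b\<in>UNIV. \<Sum>d\<in>UNIV. Q b c * (G a d * H d b))"
    by (simp only: e sum.distrib sum_subtractf sum_distrib_left)
  then show ?thesis using s1 s2 s3 by (simp add: algebra_simps)
qed


lemma Jsum: "(\<Sum>a\<in>UNIV. \<Sum>b\<in>UNIV. \<Sum>c\<in>UNIV. \<Sum>d\<in>UNIV. R a b c d * H c a * H d b)
  = (\<Sum>a\<in>UNIV. \<Sum>c\<in>UNIV. (\<Sum>b\<in>UNIV. \<Sum>d\<in>UNIV. R a b c d * H d b) * H c a)"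
proof -
  have "(\<Sum>b\<in>UNIV. \<Sum>c\<in>UNIV. \<Sum>d\<in>UNIV. R a b c d * H c a * H d b)
     = (\<Sum>c\<in>UNIV. (\<Sum>b\<in>UNIV. \<Sum>d\<in>UNIV. R a b c d * H d b) * H c a)" for a
  proof -
    have "(\<Sum>b\<in>UNIV. \<Sum>c\<in>UNIV. \<Sum>d\<in>UNIV. R a b c d * H c a * H d b)
      = (\<Sum>c\<in>UNIV. \<Sum>b\<in>UNIV. \<Sum>d\<in>UNIV. R a b c d * H c a * H d b)" by (rule sum.swap)
    also have "\<dots> = (\<Sum>c\<in>UNIV. (\<Sum>b\<in>UNIV. \<Sum>d\<in>UNIV. R a b c d * H d b) * H c a)"
      by (simp add: sum_distrib_right sum_distrib_left mult_ac)
    finally show ?thesis .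
  qed
  then show ?thesis by simp
qed

lemma psch_wedge:
  assumes N: "CARD('i) \<ge> 3"
  shows "(\<lambda>A C. (1 / real (CARD('i) - 2)) * ((\<Sum>b\<in>UNIV. \<Sum>d\<in>UNIV. wedge G Q A b C d * H d b)
     - (1 / (2 * (real (CARD('i) - 2) + 1))) *
       (\<Sum>a\<in>UNIV. \<Sum>b\<in>UNIV. \<Sum>c\<in>UNIV. \<Sum>d\<in>UNIV. wedge G Q a b c d * H c a * H d b) * G A C)) = Q"
proof -
  define T where "T = (\<Sum>b\<in>UNIV. \<Sum>d\<in>UNIV. Q b d * H d b)"
  define n where "n = real CARD('i) - 2"
  have n: "real (CARD('i) - 2) = n" "n > 0" using N by (auto simp: n_def of_nat_diff)
  have r: "(\<Sum>b\<in>UNIV. \<Sum>d\<in>UNIV. wedge G Q a b c d * H d b) = n * Q a c + T * G a c" for a c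
    using wedge_ric by (simp add: T_def n_def)
  have "(\<Sum>a\<in>UNIV. \<Sum>b\<in>UNIV. \<Sum>c\<in>UNIV. \<Sum>d\<in>UNIV. wedge G Q a b c d * H c a * H d b)
     = (\<Sum>a\<in>UNIV. \<Sum>c\<in>UNIV. (n * Q a c + T * G a c) * H c a)" by (simp only: Jsum r)
  also have "\<dots> = n * (\<Sum>a\<in>UNIV. \<Sum>c\<in>UNIV. Q a c * H c a) + T * (\<Sum>c\<in>UNIV. \<Sum>a\<in>UNIV. H c a * G a c)"
    by (subst (2) sum.swap) (simp add: algebra_simps sum.distrib sum_distrib_left)
  also have "\<dots> = n * T + T * (n + 2)"
    by (simp add: T_def trHG n_def)
  finally have J: "(\<Sum>a\<in>UNIV. \<Sum>b\<in>UNIV. \<Sum>c\<in>UNIV. \<Sum>d\<in>UNIV. wedge G Q a b c d * H c a * H d b)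
      = T * (2 * n + 2)"
    by (simp add: algebra_simps)
  show ?thesis
  proof -
    have d: "n * 2 + n * (n * 2) \<noteq> 0" using n(2)
      by (metis add_pos_pos mult_pos_pos less_irrefl zero_less_numeral)
    show ?thesis
    unfolding r J n(1) using n(2) d by (auto simp: fun_eq_iff field_simps)
  qed
qed

lemma lower_G: "(\<Sum>a\<in>UNIV. u a * G a c) = (\<Sum>b\<in>UNIV. G c b * u b)"
  by (rule sum.cong) (auto simp: GS[of c] mult.commute)

lemma raise: "(\<Sum>c\<in>UNIV. H b c * (\<Sum>e\<in>UNIV. G c e * u e)) = u b"
proof -
  have "(\<Sum>c\<in>UNIV. H b c * (\<Sum>e\<in>UNIV. G c e * u e)) = (\<Sum>e\<in>UNIV. (\<Sum>c\<in>UNIV. H b c * G c e) * u e)"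
    by (simp add: sum_distrib_left sum_distrib_right mult_ac) (rule sum.swap)
  then show ?thesis by (simp add: HG)
qed


lemma orth_expand:
  "(\<Sum>a\<in>UNIV. u a * wedge G P a b c d) = (\<Sum>e\<in>UNIV. G c e * u e) * P b d
     - G b c * (\<Sum>a\<in>UNIV. u a * P a d) + G b d * (\<Sum>a\<in>UNIV. u a * P a c)
     - (\<Sum>e\<in>UNIV. G d e * u e) * P b c"
proof -
  have "(\<Sum>a\<in>UNIV. u a * wedge G P a b c d) = (\<Sum>a\<in>UNIV. u a * G a c) * P b d
     - G b c * (\<Sum>a\<in>UNIV. u a * P a d) + G b d * (\<Sum>a\<in>UNIV. u a * P a c)
     - (\<Sum>a\<in>UNIV. u a * G a d) * P b c"
    by (simp add: wedge_def algebra_simps sum.distrib sum_subtractf sum_distrib_left sum_distrib_right)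
  then show ?thesis by (simp only: lower_G)
qed

lemma orth_Q0:
  fixes u :: "'i \<Rightarrow> real"
  defines "l \<equiv> \<lambda>a. \<Sum>b\<in>UNIV. G a b * u b"
  defines "\<iota> \<equiv> \<Sum>a\<in>UNIV. l a * u a"
  assumes i: "\<iota> \<noteq> 0"
  shows "(\<Sum>a\<in>UNIV. u a * wedge G (\<lambda>X Y. G X Y - 2 / \<iota> * l X * l Y) a b c d) = 0"
proof -
  have v: "(\<Sum>a\<in>UNIV. u a * (G a d - 2 / \<iota> * l a * l d)) = - l d" for d
  proof -
    have "(\<Sum>a\<in>UNIV. u a * (G a d - 2 / \<iota> * l a * l d))
       = (\<Sum>a\<in>UNIV. u a * G a d) - 2 / \<iota> * l d * \<iota>"
      by (simp add: \<iota>_def algebra_simps sum_subtractf sum_distrib_left sum_divide_distrib)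
    then show ?thesis using i by (simp add: lower_G l_def)
  qed
  have lc: "(\<Sum>e\<in>UNIV. G c e * u e) = l c" for c by (simp add: l_def)
  show ?thesis unfolding orth_expand v lc using i
    by (simp add: field_simps GS[of c b] GS[of d b])
qed

lemma orth_forward:
  fixes u :: "'i \<Rightarrow> real" and P :: "'i \<Rightarrow> 'i \<Rightarrow> real"
  defines "l \<equiv> \<lambda>a. \<Sum>b\<in>UNIV. G a b * u b"
  defines "\<iota> \<equiv> \<Sum>a\<in>UNIV. l a * u a"
  assumes i: "\<iota> \<noteq> 0" and N: "CARD('i) \<ge> 3"
    and Ps: "\<And>a b. P a b = P b a"
    and orth: "\<And>b c d. (\<Sum>a\<in>UNIV. u a * wedge G P a b c d) = 0"
  shows "\<exists>k. P = (\<lambda>X Y. k * (G X Y - 2 / \<iota> * l X * l Y))"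
proof -
  define v where "v d = (\<Sum>a\<in>UNIV. u a * P a d)" for d
  define s where "s = (\<Sum>c\<in>UNIV. u c * v c)"
  have E0: "l c * P b d - G b c * v d + G b d * v c - l d * P b c = 0" for b c d
    using orth[of b c d] unfolding orth_expand v_def l_def by simp
  have E1: "\<iota> * P b d - l b * v d + G b d * s - l d * v b = 0" for b d
  proof -
    have "(\<Sum>c\<in>UNIV. u c * (l c * P b d - G b c * v d + G b d * v c - l d * P b c)) = 0"
      using E0 by simp
    moreover have "(\<Sum>c\<in>UNIV. u c * (l c * P b d - G b c * v d + G b d * v c - l d * P b c))
      = \<iota> * P b d - (\<Sum>c\<in>UNIV. u c * G c b) * v d + G b d * s - l d * (\<Sum>c\<in>UNIV. u c * P c b)"
      by (simp add: \<iota>_def s_def algebra_simps sum.distrib sum_subtractf sum_distrib_left sum_distrib_right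
          GS[of b] Ps[of b])
    ultimately show ?thesis by (simp add: lower_G l_def v_def)
  qed
  have Pf: "P b d = (l b * v d - G b d * s + l d * v b) / \<iota>" for b d
    using E1[of b d] i by (simp add: field_simps)
  define w where "w d = \<iota> * v d - s * l d" for d
  have E2: "l b * (l c * v d - l d * v c) = G b c * w d - G b d * w c" for b c d
  proof -
    have IP: "\<iota> * P x y = l x * v y - G x y * s + l y * v x" for x y using E1[of x y] by linarith
    have "\<iota> * (l c * P b d - G b c * v d + G b d * v c - l d * P b c) = 0" using E0 by simp
    then have "l c * (\<iota> * P b d) - \<iota> * G b c * v d + \<iota> * G b d * v c - l d * (\<iota> * P b c) = 0"
      by (simp add: algebra_simps)
    then show ?thesis unfolding IP w_def by (simp add: algebra_simps; linarith)
  qed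
  have W: "w d = 0" for d
  proof -
    have "(\<Sum>b\<in>UNIV. \<Sum>c\<in>UNIV. H b c * (l b * (l c * v d - l d * v c)))
        = (\<Sum>b\<in>UNIV. \<Sum>c\<in>UNIV. H b c * (G b c * w d - G b d * w c))"
      using E2 by simp
    moreover have "(\<Sum>b\<in>UNIV. \<Sum>c\<in>UNIV. H b c * (l b * (l c * v d - l d * v c))) = \<iota> * v d - l d * s"
    proof -
      have "(\<Sum>b\<in>UNIV. \<Sum>c\<in>UNIV. H b c * (l b * (l c * v d - l d * v c)))
         = (\<Sum>c\<in>UNIV. (\<Sum>b\<in>UNIV. H c b * l b) * (l c * v d - l d * v c))"
        by (subst sum.swap) (simp add: sum_distrib_right HS[of _ "_::'i"] mult_ac)
      also have "\<dots> = (\<Sum>c\<in>UNIV. u c * (l c * v d - l d * v c))"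
        unfolding l_def raise ..
      also have "\<dots> = \<iota> * v d - l d * s"
        by (simp add: \<iota>_def s_def algebra_simps sum_subtractf sum_distrib_left sum_distrib_right)
      finally show ?thesis .
    qed
    moreover have "(\<Sum>b\<in>UNIV. \<Sum>c\<in>UNIV. H b c * (G b c * w d - G b d * w c))
        = real CARD('i) * w d - w d"
    proof -
      have "(\<Sum>b\<in>UNIV. \<Sum>c\<in>UNIV. H b c * (G b c * w d - G b d * w c))
        = (\<Sum>b\<in>UNIV. \<Sum>c\<in>UNIV. H b c * (G b c * w d)) - (\<Sum>b\<in>UNIV. \<Sum>c\<in>UNIV. H b c * (G b d * w c))"
        by (simp add: sum_subtractf right_diff_distrib)
      also have "(\<Sum>b\<in>UNIV. \<Sum>c\<in>UNIV. H b c * (G b c * w d)) = real CARD('i) * w d"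
      proof -
        have e: "H b c * (G b c * w d) = H b c * G c b * w d" for b c by (simp add: GS[of b c])
        have "(\<Sum>b\<in>UNIV. \<Sum>c\<in>UNIV. H b c * (G b c * w d)) = (\<Sum>b\<in>UNIV. \<Sum>c\<in>UNIV. H b c * G c b) * w d"
          by (simp only: e sum_distrib_right)
        then show ?thesis by (simp add: trHG)
      qed
      also have "(\<Sum>b\<in>UNIV. \<Sum>c\<in>UNIV. H b c * (G b d * w c)) = w d"
      proof -
        have "(\<Sum>b\<in>UNIV. \<Sum>c\<in>UNIV. H b c * (G b d * w c)) = (\<Sum>c\<in>UNIV. \<Sum>b\<in>UNIV. H b c * (G b d * w c))"
          by (rule sum.swap)
        also have "\<dots> = (\<Sum>c\<in>UNIV. (\<Sum>b\<in>UNIV. H c b * G b d) * w c)"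
        proof -
          have e: "H b c * (G b d * w c) = H c b * G b d * w c" for b c by (simp add: HS[of b c])
          show ?thesis by (simp only: e sum_distrib_right)
        qed
        finally show ?thesis by (simp add: HG)
      qed
      finally show ?thesis .
    qed
    ultimately have "(real CARD('i) - 2) * w d = 0" by (simp add: w_def algebra_simps)
    moreover have "real CARD('i) - 2 \<noteq> 0" using N by simp
    ultimately show ?thesis by simp
  qed
  have "P = (\<lambda>X Y. (- s / \<iota>) * (G X Y - 2 / \<iota> * l X * l Y))"
  proof (intro ext)
    fix b d
    have vv: "v x = s * l x / \<iota>" for x using W[of x] i by (simp add: w_def field_simps)
    show "P b d = (- s / \<iota>) * (G b d - 2 / \<iota> * l b * l d)"
      unfolding Pf vv using i by (simp add: field_simps)
  qed
  then show ?thesis by blast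
qed

end

lemma alg_curv_pair:
  assumes "alg_curv R" shows "R a b c d = R c d a b"
proof -
  have as1: "\<And>A B C D. R A B C D = - R B A C D" and as2: "\<And>A B C D. R A B C D = - R A B D C"
    and bi: "\<And>A B C D. R A B C D + R B C A D + R C A B D = 0"
    using assms unfolding alg_curv_def by blast+
  show ?thesis
    using bi[of a b c d] bi[of b c d a] bi[of c d a b] bi[of d a b c]
      as1[of a b c d] as2[of a b c d] as2[of b a c d] as1[of b c a d] as2[of b c a d] as2[of c b a d] as1[of c a b d] as2[of c a b d] as2[of a c b d] as1[of b c d a] as2[of b c d a] as2[of c b d a] as1[of c d b a] as2[of c d b a] as2[of d c b a] as1[of d b c a] as2[of d b c a] as2[of b d c a] as1[of c d a b] as2[of c d a b] as2[of d c a b] as1[of d a c b] as2[of d a c b] as2[of a d c b] as1[of a c d b] as2[of a c d b] as2[of c a d b] as1[of d a b c] as2[of d a b c] as2[of a d b c] as1[of a b d c] as2[of a b d c] as2[of b a d c] as1[of b d a c] as2[of b d a c] as2[of d b a c]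
    by linarith
qed

lemma wedge_alg_curv:
  assumes "\<And>a b. G a b = G b a" "\<And>a b. Q a b = Q b a"
  shows "alg_curv (wedge G (Q::'i::finite \<Rightarrow> _))"
  unfolding alg_curv_def wedge_def using assms by (auto simp: algebra_simps)

theorem lemma4p24:
  fixes g :: "real^'i::finite^'i" and I :: "real^'i"
  assumes dim: "CARD('i) \<ge> 3"
    and sym: "transpose g = g"
    and nondeg: "invertible g"
    and iota: "(\<Sum>A\<in>UNIV. lower g I A * I $ A) \<noteq> 0"
  shows "{R. alg_curv R \<and> trace_free g R = (\<lambda>A B C D. 0)
            \<and> (\<forall>B C D. (\<Sum>A\<in>UNIV. I $ A * R A B C D) = 0)}
         = {(\<lambda>A B C D. c * wedge (\<lambda>X Y. g $ X $ Y)
               (\<lambda>X Y. g $ X $ Y - 2 / (\<Sum>A\<in>UNIV. lower g I A * I $ A) * lower g I X * lower g I Y)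
               A B C D) | c. True}"
proof -
  define M where "M = matrix_inv g"
  have inv: "g ** M = mat 1 \<and> M ** g = mat 1"
    using nondeg unfolding invertible_def M_def matrix_inv_def by (rule someI_ex)
  have "transpose M ** g = mat 1"
    using inv sym by (metis matrix_transpose_mul transpose_mat)
  then have tM: "transpose M = M"
    by (metis inv matrix_mul_assoc matrix_mul_lid matrix_mul_rid)
  define G where "G = (\<lambda>X Y. g $ X $ Y)"
  define H where "H = ginv g"
  have GS: "G a b = G b a" for a b
    using sym unfolding G_def by (metis transpose_def vec_lambda_beta)
  have HS: "H a b = H b a" for a b
    using tM unfolding H_def ginv_def M_def[symmetric] by (metis transpose_def vec_lambda_beta)
  have GH: "(\<Sum>b\<in>UNIV. G a b * H b c) = (if a = c then 1 else 0)" for a c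
  proof -
    have "(g ** M) $ a $ c = (if a = c then 1 else 0)" using inv by (simp add: mat_def)
    then show ?thesis unfolding G_def H_def ginv_def M_def[symmetric]
      by (simp add: matrix_matrix_mult_def)
  qed
  interpret met G H using GS HS GH by unfold_locales
  define u where "u = (\<lambda>A. I $ A)"
  define l where "l = (\<lambda>a. \<Sum>b\<in>UNIV. G a b * u b)"
  have low: "lower g I = l" unfolding lower_def l_def G_def u_def by simp
  define \<iota> where "\<iota> = (\<Sum>a\<in>UNIV. l a * u a)"
  have i: "\<iota> \<noteq> 0" using iota unfolding \<iota>_def low u_def .
  define Q0 where "Q0 = (\<lambda>X Y. G X Y - 2 / \<iota> * l X * l Y)"
  have ric_eq: "ric g R = (\<lambda>A C. \<Sum>b\<in>UNIV. \<Sum>d\<in>UNIV. R A b C d * H d b)" for R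
    unfolding ric_def H_def ..
  have Psch_eq: "Psch g R = (\<lambda>A C. (1 / real (CARD('i) - 2)) * ((\<Sum>b\<in>UNIV. \<Sum>d\<in>UNIV. R A b C d * H d b)
     - (1 / (2 * (real (CARD('i) - 2) + 1))) *
       (\<Sum>a\<in>UNIV. \<Sum>b\<in>UNIV. \<Sum>c\<in>UNIV. \<Sum>d\<in>UNIV. R a b c d * H c a * H d b) * G A C))" for R
    unfolding Psch_def ric_eq Jsc_def dimn_def H_def G_def ..
  have tf_eq: "trace_free g R = (\<lambda>A B C D. R A B C D - wedge G (Psch g R) A B C D)" for R
    unfolding trace_free_def G_def ..
  have RHS: "{(\<lambda>A B C D. c * wedge (\<lambda>X Y. g $ X $ Y)
               (\<lambda>X Y. g $ X $ Y - 2 / (\<Sum>A\<in>UNIV. lower g I A * I $ A) * lower g I X * lower g I Y)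
               A B C D) | c. True} = {(\<lambda>A B C D. c * wedge G Q0 A B C D) | c. True}"
    unfolding low Q0_def \<iota>_def u_def G_def ..
  have wscale: "(\<lambda>A B C D. c * wedge G Q0 A B C D) = wedge G (\<lambda>X Y. c * Q0 X Y)" for c
    by (simp add: fun_eq_iff wedge_def algebra_simps)
  show ?thesis unfolding RHS
  proof (intro set_eqI iffI)
    fix R assume "R \<in> {R. alg_curv R \<and> trace_free g R = (\<lambda>A B C D. 0)
            \<and> (\<forall>B C D. (\<Sum>A\<in>UNIV. I $ A * R A B C D) = 0)}"
    then have ac: "alg_curv R" and tf: "trace_free g R = (\<lambda>A B C D. 0)"
      and orth: "\<And>B C D. (\<Sum>A\<in>UNIV. u A * R A B C D) = 0" unfolding u_def by auto
    define P where "P = Psch g R"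
    have Rw: "R = wedge G P"
      using tf unfolding tf_eq P_def by (auto simp: fun_eq_iff)
    have ricS: "(\<Sum>b\<in>UNIV. \<Sum>d\<in>UNIV. R a b c d * H d b) = (\<Sum>b\<in>UNIV. \<Sum>d\<in>UNIV. R c b a d * H d b)" for a c
    proof -
      have "(\<Sum>b\<in>UNIV. \<Sum>d\<in>UNIV. R c b a d * H d b) = (\<Sum>b\<in>UNIV. \<Sum>d\<in>UNIV. R a d c b * H b d)"
      proof -
        have e: "R c b a d * H d b = R a d c b * H b d" for b d
          using alg_curv_pair[OF ac, of c b a d] HS[of d b] by simp
        show ?thesis by (simp only: e)
      qed
      also have "\<dots> = (\<Sum>b\<in>UNIV. \<Sum>d\<in>UNIV. R a b c d * H d b)" by (rule sum.swap)
      finally show ?thesis ..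
    qed
    have Ps: "P a b = P b a" for a b
      unfolding P_def Psch_eq using ricS[of a b] GS[of a b] by simp
    have orth': "(\<Sum>a\<in>UNIV. u a * wedge G P a b c d) = 0" for b c d
      using orth[of b c d] unfolding Rw .
    obtain k where k: "P = (\<lambda>X Y. k * (G X Y - 2 / \<iota> * l X * l Y))"
      using orth_forward[of u P, OF _ dim Ps orth'] i unfolding \<iota>_def l_def by blast
    have "R = (\<lambda>A B C D. k * wedge G Q0 A B C D)"
      unfolding Rw k by (simp add: Q0_def fun_eq_iff wedge_def algebra_simps)
    then show "R \<in> {(\<lambda>A B C D. c * wedge G Q0 A B C D) | c. True}" by blast
  next
    fix R assume "R \<in> {(\<lambda>A B C D. c * wedge G Q0 A B C D) | c. True}"
    then obtain c where Rc: "R = wedge G (\<lambda>X Y. c * Q0 X Y)" using wscale by blast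
    have Q0S: "Q0 a b = Q0 b a" for a b unfolding Q0_def using GS[of a b] by simp
    have ac: "alg_curv R" unfolding Rc
      by (rule wedge_alg_curv) (auto simp: GS Q0S)
    have "Psch g R = (\<lambda>X Y. c * Q0 X Y)"
      unfolding Psch_eq Rc by (rule psch_wedge[OF dim])
    then have tf: "trace_free g R = (\<lambda>A B C D. 0)"
      unfolding tf_eq by (simp add: Rc)
    have "(\<Sum>A\<in>UNIV. u A * R A B C D) = 0" for B C D
    proof -
      have "(\<Sum>A\<in>UNIV. u A * R A B C D) = c * (\<Sum>A\<in>UNIV. u A * wedge G Q0 A B C D)"
        unfolding Rc by (simp add: wedge_def sum_distrib_left algebra_simps)
      also have "\<dots> = 0" using orth_Q0[of u] i unfolding Q0_def l_def \<iota>_def by simp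
      finally show ?thesis .
    qed
    with ac tf show "R \<in> {R. alg_curv R \<and> trace_free g R = (\<lambda>A B C D. 0)
            \<and> (\<forall>B C D. (\<Sum>A\<in>UNIV. I $ A * R A B C D) = 0)}" unfolding u_def by auto
  qed
qed

end
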